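(* Let $\gamma:S^1\to GL(n,\mathbb{C})$ be a smooth loop satisfying $\gamma(z)\gamma(-z)^T=I$, and suppose $\gamma(z)=\gamma_+(z)\,d(z)\,\gamma_-(z)^{-1}$ is a Birkhoff factorization of $\gamma$. Then $d(z)=I$, the Birkhoff factorization of $\gamma$ is unique, and the factors satisfy $\gamma_\pm(z)\gamma_\pm(-z)^T=I$.
   Context: Let $\mathbb{D}_+=\{|z|\le1\}$ and $\mathbb{D}_-=\{|z|\ge1\}\cup\{\infty\}$ in the Riemann sphere. A Birkhoff factorization of a loop $\gamma$ is a factorization $\gamma(z)=\gamma_+(z)d(z)\gamma_-(z)^{-1}$ on $|z|=1$ where $\gamma_+$ (resp. $\gamma_-$) is the restriction to the unit circle of a function analytic on $\mathbb{D}_+$ (resp. $\mathbb{D}_-$) up to the boundary with values in $GL(n,\mathbb{C})$, $\gamma_-(\infty)=I$, and $d(z)$ is diagonal with diagonal entries $z^{a_i}$, $a_i\in\mathbb{Z}$. *)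

theory Defs
  imports "HOL-Analysis.Analysis"
begin

text \<open>Matrices in GL(n,C) are modelled as invertible elements of complex^'n^'n,
  with an arbitrary finite index type 'n (so n = CARD('n)).\<close>

definition smooth_real_fun :: "(real \<Rightarrow> complex) \<Rightarrow> bool" where
  "smooth_real_fun f \<longleftrightarrow>
     (\<exists>D :: nat \<Rightarrow> real \<Rightarrow> complex. D 0 = f \<and>
        (\<forall>k t. (D k has_vector_derivative D (Suc k) t) (at t)))"

text \<open>A smooth loop S^1 -> GL(n,C); the loop is given by its values on |z| = 1.\<close>
definition smooth_loop :: "(complex \<Rightarrow> complex^'n^'n) \<Rightarrow> bool" where
  "smooth_loop g \<longleftrightarrow>
     (\<forall>z. cmod z = 1 \<longrightarrow> invertible (g z)) \<and>
     (\<forall>i j. smooth_real_fun (\<lambda>t. g (cis t) $ i $ j))"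

definition plus_factor :: "(complex \<Rightarrow> complex^'n^'n) \<Rightarrow> bool" where
  "plus_factor g \<longleftrightarrow>
     (\<forall>i j. continuous_on (cball 0 1) (\<lambda>z. g z $ i $ j) \<and>
            (\<lambda>z. g z $ i $ j) holomorphic_on ball 0 1) \<and>
     (\<forall>z \<in> cball 0 1. invertible (g z))"

text \<open>Analytic on D_- = {|z| >= 1} \<union> {\<infinity>} up to the boundary, with values in GL(n,C)
  and value I at infinity: in the chart w = 1/z around infinity this is plus_factor.\<close>
definition minus_factor :: "(complex \<Rightarrow> complex^'n^'n) \<Rightarrow> bool" where
  "minus_factor g \<longleftrightarrow> plus_factor (\<lambda>w. if w = 0 then mat 1 else g (1 / w))"

definition diag_powers :: "('n \<Rightarrow> int) \<Rightarrow> complex \<Rightarrow> complex^'n^'n" where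
  "diag_powers a z = (\<chi> i j. if i = j then z powi a i else 0)"

definition birkhoff_factorization ::
  "(complex \<Rightarrow> complex^'n^'n) \<Rightarrow> (complex \<Rightarrow> complex^'n^'n) \<Rightarrow> ('n \<Rightarrow> int)
     \<Rightarrow> (complex \<Rightarrow> complex^'n^'n) \<Rightarrow> bool" where
  "birkhoff_factorization g gp a gm \<longleftrightarrow>
     plus_factor gp \<and> minus_factor gm \<and>
     (\<forall>z. cmod z = 1 \<longrightarrow> g z = gp z ** diag_powers a z ** matrix_inv (gm z))"

end

theory Submission
  imports Defs "HOL-Complex_Analysis.Complex_Analysis"
begin
lemma circle_liouville:
  fixes f h :: "complex \<Rightarrow> complex"
  assumes cf: "continuous_on (cball 0 1) f" and hf: "f holomorphic_on ball 0 1"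
    and ch: "continuous_on (cball 0 1) h" and hh: "h holomorphic_on ball 0 1"
    and eq: "\<And>z. cmod z = 1 \<Longrightarrow> f z = h (cnj z)"
  shows "\<forall>z \<in> cball 0 1. f z = h 0 \<and> h z = f 0"
proof -
  have inv: "1 / z = cnj z" if "cmod z = 1" for z
  proof -
    have "z * cnj z = 1" using complex_norm_square[of z] that by simp
    moreover have "z \<noteq> 0" using that by auto
    ultimately show ?thesis by (simp add: field_simps)
  qed
  define F where "F z = (if cmod z \<le> 1 then f z else h (1 / z))" for z
  have c2: "continuous_on {z. 1 \<le> cmod z} (\<lambda>z. h (1 / z))"
  proof (rule continuous_on_compose2[OF ch])
    show "continuous_on {z. 1 \<le> cmod z} (\<lambda>z. 1 / z)"
      by (intro continuous_intros) auto
    show "(\<lambda>z. 1 / z) ` {z. 1 \<le> cmod z} \<subseteq> cball 0 1"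
      by (auto simp: norm_divide divide_le_eq)
  qed
  have cF: "continuous_on UNIV F"
  proof -
    have "continuous_on (cball 0 1 \<union> {z. 1 \<le> cmod z}) (\<lambda>z. if cmod z \<le> 1 then f z else h (1 / z))"
    proof (rule continuous_on_cases[OF closed_cball _ cf c2])
      show "closed {z::complex. 1 \<le> cmod z}"
        by (rule closed_Collect_le) (auto intro: continuous_intros)
      show "\<forall>x. x \<in> cball 0 1 \<and> \<not> cmod x \<le> 1 \<or> x \<in> {z. 1 \<le> cmod z} \<and> cmod x \<le> 1 \<longrightarrow> f x = h (1 / x)"
        using eq inv by auto
    qed
    moreover have "cball 0 1 \<union> {z. 1 \<le> cmod z} = UNIV" by auto
    ultimately show ?thesis unfolding F_def by simp
  qed
  define G where "G w = F (exp w)" for w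
  have cG: "continuous_on UNIV G"
    unfolding G_def by (rule continuous_on_compose2[OF cF]) (auto intro: continuous_intros)
  have hG: "G holomorphic_on UNIV"
  proof (rule holomorphic_on_paste_across_line[of UNIV 1 _ 0])
    have "(\<lambda>w. f (exp w)) holomorphic_on {z. 1 \<bullet> z < 0}"
      by (rule holomorphic_on_compose_gen[OF _ hf, unfolded o_def]) (auto intro: holomorphic_intros)
    then show "G holomorphic_on UNIV \<inter> {z. 1 \<bullet> z < 0}"
      unfolding Int_UNIV_left by (rule holomorphic_transform) (auto simp: G_def F_def)
    have "(\<lambda>w. h (exp (-w))) holomorphic_on {z. 0 < 1 \<bullet> z}"
      by (rule holomorphic_on_compose_gen[OF _ hh, unfolded o_def]) (auto intro!: holomorphic_intros)
    then show "G holomorphic_on UNIV \<inter> {z. 0 < 1 \<bullet> z}"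
      unfolding Int_UNIV_left by (rule holomorphic_transform) (auto simp: G_def F_def exp_minus divide_inverse)
  qed (use cG in auto)
  have bG: "bounded (range G)"
  proof -
    have "bounded (f ` cball 0 1 \<union> h ` cball 0 1)"
      using cf ch by (intro bounded_Un[THEN iffD2] conjI compact_imp_bounded compact_continuous_image) auto
    moreover have "range G \<subseteq> f ` cball 0 1 \<union> h ` cball 0 1"
      by (auto simp: G_def F_def norm_divide divide_le_eq)
    ultimately show ?thesis using bounded_subset by blast
  qed
  obtain c where Gc: "\<And>w. G w = c"
    using Liouville_theorem[OF hG bG] unfolding constant_on_def by blast
  have Fc: "F z = c" if "z \<noteq> 0" for z
    using Gc[of "Ln z"] that by (simp add: G_def)
  let ?S = "cball (0::complex) 1 - {0}"
  have cl: "0 \<in> closure ?S" "closure ?S \<subseteq> cball 0 1"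
  proof -
    show "closure ?S \<subseteq> cball 0 1"
      by (rule closure_minimal) auto
    show "0 \<in> closure ?S"
      unfolding closure_approachable
    proof (intro allI impI)
      fix e :: real assume "0 < e"
      then show "\<exists>y\<in>?S. dist y 0 < e"
      proof (intro bexI)
        define r where "r = min (e/2) (1/2)"
        have r: "0 < r" "r \<le> 1/2" "r < e" using \<open>0 < e\<close> by (auto simp: r_def)
        have n: "norm (complex_of_real r) = r" using r by simp
        show "dist (complex_of_real r) 0 < e" using n r by simp
        show "complex_of_real r \<in> ?S" using n r by auto
      qed
    qed
  qed
  have fS: "f z = c" if "z \<in> ?S" for z
    using Fc[of z] that by (auto simp: F_def)
  have hS: "h z = c" if "z \<in> ?S" for z
  proof (cases "cmod z = 1")
    case True
    then have "h z = f (1 / z)" using eq[of "1/z"] inv[of z] by (simp add: norm_divide)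
    then show ?thesis using Fc[of "1/z"] True that by (auto simp: F_def norm_divide)
  next
    case False
    then have "cmod z < 1" using that by auto
    then have "1 < cmod (1 / z)" using that by (simp add: norm_divide)
    then show ?thesis using Fc[of "1/z"] that by (auto simp: F_def)
  qed
  have f0: "f 0 = c"
    by (rule continuous_constant_on_closure[OF continuous_on_subset[OF cf cl(2)] fS cl(1)])
  have h0: "h 0 = c"
    by (rule continuous_constant_on_closure[OF continuous_on_subset[OF ch cl(2)] hS cl(1)])
  show ?thesis
  proof
    fix z :: complex assume z: "z \<in> cball 0 1"
    show "f z = h 0 \<and> h z = f 0"
    proof (cases "z = 0")
      case True then show ?thesis using f0 h0 by simp
    next
      case False then show ?thesis using fS[of z] hS[of z] f0 h0 z by simp
    qed
  qed
qed

definition pt :: "(complex \<Rightarrow> complex) \<Rightarrow> bool" where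
  "pt f \<longleftrightarrow> continuous_on (cball 0 1) f \<and> f holomorphic_on ball 0 1"

definition mpt :: "(complex \<Rightarrow> complex^'n^'n) \<Rightarrow> bool" where
  "mpt A \<longleftrightarrow> (\<forall>i j. pt (\<lambda>z. A z $ i $ j))"

lemma pt_const: "pt (\<lambda>z. c)"
  unfolding pt_def by (auto intro: continuous_intros holomorphic_intros)

lemma pt_id: "pt (\<lambda>z. z)"
  unfolding pt_def by (auto intro: continuous_intros holomorphic_intros)

lemma pt_add: "pt f \<Longrightarrow> pt g \<Longrightarrow> pt (\<lambda>z. f z + g z)"
  unfolding pt_def by (auto intro: continuous_intros holomorphic_intros)

lemma pt_mult: "pt f \<Longrightarrow> pt g \<Longrightarrow> pt (\<lambda>z. f z * g z)"
  unfolding pt_def by (auto intro: continuous_intros holomorphic_intros)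

lemma pt_power: "pt f \<Longrightarrow> pt (\<lambda>z. f z ^ n)"
  unfolding pt_def by (auto intro: continuous_intros holomorphic_intros)

lemma pt_sum:
  assumes "\<And>k. k \<in> S \<Longrightarrow> pt (f k)" shows "pt (\<lambda>z. \<Sum>k\<in>S. f k z)"
proof -
  have "continuous_on (cball 0 1) (\<lambda>z. \<Sum>k\<in>S. f k z)"
    by (rule continuous_on_sum) (use assms in \<open>auto simp: pt_def\<close>)
  moreover have "(\<lambda>z. \<Sum>k\<in>S. f k z) holomorphic_on ball 0 1"
    by (rule holomorphic_on_sum) (use assms in \<open>auto simp: pt_def\<close>)
  ultimately show ?thesis by (simp add: pt_def)
qed

lemma pt_prod:
  assumes "\<And>k. k \<in> S \<Longrightarrow> pt (f k)" shows "pt (\<lambda>z. \<Prod>k\<in>S. f k z)"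
proof -
  have "continuous_on (cball 0 1) (\<lambda>z. \<Prod>k\<in>S. f k z)"
    by (rule continuous_on_prod) (use assms in \<open>auto simp: pt_def\<close>)
  moreover have "(\<lambda>z. \<Prod>k\<in>S. f k z) holomorphic_on ball 0 1"
    by (rule holomorphic_on_prod) (use assms in \<open>auto simp: pt_def\<close>)
  ultimately show ?thesis by (simp add: pt_def)
qed

lemma pt_div:
  assumes "pt f" "pt g" and nz: "\<And>z. z \<in> cball 0 1 \<Longrightarrow> g z \<noteq> 0" shows "pt (\<lambda>z. f z / g z)"
proof -
  have "continuous_on (cball 0 1) (\<lambda>z. f z / g z)"
    by (rule continuous_on_divide) (use assms in \<open>auto simp: pt_def\<close>)
  moreover have "(\<lambda>z. f z / g z) holomorphic_on ball 0 1"
    by (rule holomorphic_on_divide) (use assms in \<open>auto simp: pt_def\<close>)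
  ultimately show ?thesis by (simp add: pt_def)
qed

lemma pt_neg: assumes "pt f" shows "pt (\<lambda>z. f (- z))"
proof -
  have c: "continuous_on (cball 0 1) f" and h: "f holomorphic_on ball 0 1"
    using assms by (auto simp: pt_def)
  have "continuous_on (cball 0 1) (\<lambda>z. f (- z))"
  proof (rule continuous_on_compose2[OF c])
    show "continuous_on (cball 0 1) (\<lambda>z::complex. - z)" by (rule continuous_on_minus[OF continuous_on_id])
    show "(\<lambda>z::complex. - z) ` cball 0 1 \<subseteq> cball 0 1" by auto
  qed
  moreover have "(\<lambda>z. f (- z)) holomorphic_on ball 0 1"
  proof (rule holomorphic_on_compose_gen[OF _ h, unfolded o_def])
    show "(\<lambda>z::complex. - z) holomorphic_on ball 0 1" by (rule holomorphic_on_minus[OF holomorphic_on_ident])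
    show "(\<lambda>z::complex. - z) ` ball 0 1 \<subseteq> ball 0 1" by auto
  qed
  ultimately show ?thesis by (simp add: pt_def)
qed

lemma pt_cong:
  assumes "pt f" and e: "\<And>z. z \<in> cball 0 1 \<Longrightarrow> f z = g z" shows "pt g"
proof -
  have c: "continuous_on (cball 0 1) f" and h: "f holomorphic_on ball 0 1"
    using assms(1) by (auto simp: pt_def)
  have "continuous_on (cball 0 1) g"
    by (rule continuous_on_eq[OF c e])
  moreover have "g holomorphic_on ball 0 1"
  proof (rule holomorphic_transform[OF h])
    fix x :: complex assume "x \<in> ball 0 1"
    then have "x \<in> cball 0 1" by simp
    then show "f x = g x" by (rule e)
  qed
  ultimately show ?thesis by (simp add: pt_def)
qed

lemma pt_if: "pt f \<Longrightarrow> pt g \<Longrightarrow> pt (\<lambda>z. if c then f z else g z)"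
  by (cases c) simp_all

lemma mpt_const: "mpt (\<lambda>z. C)"
  by (simp add: mpt_def pt_const)

lemma mpt_mult: "mpt A \<Longrightarrow> mpt B \<Longrightarrow> mpt (\<lambda>z. A z ** B z)"
  unfolding mpt_def matrix_matrix_mult_def
  by (auto intro!: pt_sum pt_mult)

lemma mpt_transpose: "mpt A \<Longrightarrow> mpt (\<lambda>z. transpose (A z))"
  unfolding mpt_def transpose_def by simp

lemma mpt_neg: "mpt A \<Longrightarrow> mpt (\<lambda>z. A (- z))"
  unfolding mpt_def by (auto intro: pt_neg)

lemma pt_det: "mpt A \<Longrightarrow> pt (\<lambda>z. det (A z))"
  unfolding det_def mpt_def
  by (auto intro!: pt_sum pt_mult pt_const pt_prod)

lemma inv_props:
  fixes A :: "'a::field^'n^'n"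
  assumes "invertible A"
  shows "A ** matrix_inv A = mat 1" "matrix_inv A ** A = mat 1"
proof -
  have "\<exists>A'. A ** A' = mat 1 \<and> A' ** A = mat 1" using assms by (simp add: invertible_def)
  then have "A ** matrix_inv A = mat 1 \<and> matrix_inv A ** A = mat 1"
    unfolding matrix_inv_def by (rule someI_ex)
  then show "A ** matrix_inv A = mat 1" "matrix_inv A ** A = mat 1" by auto
qed

lemma inv_unique:
  fixes A B :: "'a::field^'n^'n"
  assumes "A ** B = mat 1"
  shows "matrix_inv A = B"
proof -
  have i: "invertible A" using assms invertible_right_inverse by blast
  have "matrix_inv A = matrix_inv A ** (A ** B)" using assms by simp
  also have "\<dots> = (matrix_inv A ** A) ** B" by (simp add: matrix_mul_assoc)
  also have "\<dots> = B" using inv_props[OF i] by simp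
  finally show ?thesis .
qed

lemma inv_mat1: "matrix_inv (mat 1 :: 'a::field^'n^'n) = mat 1"
  by (rule inv_unique) simp

lemma inv_invertible:
  fixes A :: "'a::field^'n^'n"
  assumes "invertible A" shows "invertible (matrix_inv A)"
  using inv_props[OF assms] invertible_def by blast

lemma inv_entry:
  fixes A :: "'a::field^'n^'n"
  assumes "invertible A"
  shows "matrix_inv A $ k $ j =
    det (\<chi> i l. if l = k then (if i = j then 1 else 0) else A $ i $ l) / det A"
proof -
  have d: "det A \<noteq> 0" using assms invertible_det_nz by blast
  define x where "x = (\<chi> k. matrix_inv A $ k $ j)"
  define b :: "'a^'n" where "b = (\<chi> i. if i = j then 1 else 0)"
  have "A *v x = (\<chi> i. (A ** matrix_inv A) $ i $ j)"
    by (simp add: x_def matrix_vector_mult_def matrix_matrix_mult_def)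
  also have "\<dots> = b"
    using inv_props(1)[OF assms] by (simp add: mat_def b_def)
  finally have "x = (\<chi> k. det(\<chi> i l. if l = k then b $ i else A $ i $ l) / det A)"
    using cramer[OF d] by blast
  then have "x $ k = det(\<chi> i l. if l = k then b $ i else A $ i $ l) / det A"
    by simp
  moreover have "(\<chi> i l. if l = k then b $ i else A $ i $ l) = (\<chi> i l. if l = k then (if i = j then 1 else 0) else A $ i $ l)"
    by (simp add: b_def vec_eq_iff)
  ultimately show ?thesis by (simp add: x_def)
qed

lemma mpt_inv:
  fixes A :: "complex \<Rightarrow> complex^'n^'n"
  assumes "mpt A" and inv: "\<And>z. z \<in> cball 0 1 \<Longrightarrow> invertible (A z)"
  shows "mpt (\<lambda>z. matrix_inv (A z))"
  unfolding mpt_def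
proof (intro allI)
  fix k j
  define B where "B = (\<lambda>z. (\<chi> i l. if l = k then (if i = j then 1 else 0) else A z $ i $ l) :: complex^'n^'n)"
  have m: "mpt B"
    unfolding mpt_def
  proof (intro allI)
    fix i l
    have "pt (\<lambda>z. if l = k then (if i = j then 1 else 0) else A z $ i $ l)"
      by (rule pt_if[OF pt_const]) (use assms(1) in \<open>simp add: mpt_def\<close>)
    then show "pt (\<lambda>z. B z $ i $ l)" by (simp add: B_def)
  qed
  have nz: "det (A z) \<noteq> 0" if "z \<in> cball 0 1" for z
    using inv[OF that] invertible_det_nz by blast
  have "pt (\<lambda>z. det (B z) / det (A z))"
    by (rule pt_div[OF pt_det[OF m] pt_det[OF assms(1)] nz])
  then show "pt (\<lambda>z. matrix_inv (A z) $ k $ j)"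
  proof (rule pt_cong)
    fix z :: complex assume "z \<in> cball 0 1"
    then show "det (B z) / det (A z) = matrix_inv (A z) $ k $ j"
      using inv_entry[OF inv, of z k j] by (simp add: B_def)
  qed
qed

lemma plus_factor_iff: "plus_factor A \<longleftrightarrow> mpt A \<and> (\<forall>z\<in>cball 0 1. invertible (A z))"
  by (auto simp: plus_factor_def mpt_def pt_def)

lemma diag_left: "(diag_powers a z ** M) $ i $ j = z powi a i * M $ i $ j"
  unfolding diag_powers_def matrix_matrix_mult_def vec_lambda_beta
  by (subst sum.cong[OF refl, where h = "\<lambda>k. if k = i then z powi a i * M $ i $ j else 0"]) auto

lemma diag_right: "(M ** diag_powers a z) $ i $ j = M $ i $ j * z powi a j"
  unfolding diag_powers_def matrix_matrix_mult_def vec_lambda_beta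
  by (subst sum.cong[OF refl, where h = "\<lambda>k. if k = j then M $ i $ j * z powi a j else 0"]) auto

lemma diag_transpose: "transpose (diag_powers a z) = diag_powers a z"
  by (simp add: diag_powers_def transpose_def vec_eq_iff)

lemma diag_zero: "(\<And>i. a i = 0) \<Longrightarrow> diag_powers a z = mat 1"
  by (simp add: diag_powers_def mat_def vec_eq_iff)

lemma circ_inv: "cmod z = 1 \<Longrightarrow> 1 / cnj z = z"
proof -
  assume "cmod z = 1"
  then have "z * cnj z = 1" using complex_norm_square[of z] by simp
  moreover have "cnj z \<noteq> 0" using \<open>cmod z = 1\<close> by auto
  ultimately show ?thesis by (simp add: divide_eq_eq)
qed

lemma matrix_core:
  fixes F H :: "complex \<Rightarrow> complex^'n^'n"
  assumes F: "mpt F" and H: "mpt H" and e: "\<And>z. cmod z = 1 \<Longrightarrow> F z = H (cnj z)" and z: "z \<in> cball 0 1"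
  shows "F z = H 0 \<and> H z = F 0"
proof -
  have "F z $ i $ j = H 0 $ i $ j \<and> H z $ i $ j = F 0 $ i $ j" for i j
  proof -
    have pF: "pt (\<lambda>z. F z $ i $ j)" using F by (simp add: mpt_def)
    have pH: "pt (\<lambda>z. H z $ i $ j)" using H by (simp add: mpt_def)
    have "\<forall>z\<in>cball 0 1. F z $ i $ j = H 0 $ i $ j \<and> H z $ i $ j = F 0 $ i $ j"
    proof (rule circle_liouville)
      show "continuous_on (cball 0 1) (\<lambda>z. F z $ i $ j)" "(\<lambda>z. F z $ i $ j) holomorphic_on ball 0 1"
        using pF unfolding pt_def by blast+
      show "continuous_on (cball 0 1) (\<lambda>z. H z $ i $ j)" "(\<lambda>z. H z $ i $ j) holomorphic_on ball 0 1"
        using pH unfolding pt_def by blast+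
      fix w :: complex assume "cmod w = 1"
      then show "F w $ i $ j = H (cnj w) $ i $ j" using e by metis
    qed
    then show ?thesis using z by blast
  qed
  then show ?thesis by (simp add: vec_eq_iff)
qed

lemma pt_core:
  assumes "pt f" "pt h" "\<And>z. cmod z = 1 \<Longrightarrow> f z = h (cnj z)"
  shows "f 0 = h 0"
proof -
  have "\<forall>z\<in>cball 0 1. f z = h 0 \<and> h z = f 0"
  proof (rule circle_liouville)
    show "continuous_on (cball 0 1) f" "f holomorphic_on ball 0 1"
      using assms(1) unfolding pt_def by blast+
    show "continuous_on (cball 0 1) h" "h holomorphic_on ball 0 1"
      using assms(2) unfolding pt_def by blast+
    fix w :: complex assume "cmod w = 1"
    then show "f w = h (cnj w)" by (rule assms(3))
  qed
  moreover have "(0::complex) \<in> cball 0 1" by simp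
  ultimately show ?thesis by blast
qed

lemma bf_facts:
  fixes g gp gm :: "complex \<Rightarrow> complex^'n^'n"
  assumes "birkhoff_factorization g gp a gm"
  shows "mpt gp" "\<And>z. z \<in> cball 0 1 \<Longrightarrow> invertible (gp z)"
    "mpt (\<lambda>w. if w = 0 then mat 1 else gm (1 / w))"
    "\<And>w. w \<in> cball 0 1 \<Longrightarrow> invertible (if w = 0 then mat 1 else gm (1 / w))"
    "\<And>z. cmod z = 1 \<Longrightarrow> gm z = (\<lambda>w. if w = 0 then mat 1 else gm (1 / w)) (cnj z)"
    "\<And>z. cmod z = 1 \<Longrightarrow> g z = gp z ** diag_powers a z ** matrix_inv (gm z)"
    "\<And>z. cmod z = 1 \<Longrightarrow> invertible (gm z)"
proof -
  have p: "plus_factor gp" and m: "minus_factor gm"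
    and e: "\<And>z. cmod z = 1 \<Longrightarrow> g z = gp z ** diag_powers a z ** matrix_inv (gm z)"
    using assms by (auto simp: birkhoff_factorization_def)
  show "mpt gp" "\<And>z. z \<in> cball 0 1 \<Longrightarrow> invertible (gp z)"
    using p by (auto simp: plus_factor_iff)
  have pm: "plus_factor (\<lambda>w. if w = 0 then mat 1 else gm (1 / w))"
    using m by (simp add: minus_factor_def)
  show "mpt (\<lambda>w. if w = 0 then mat 1 else gm (1 / w))"
    "\<And>w. w \<in> cball 0 1 \<Longrightarrow> invertible (if w = 0 then mat 1 else gm (1 / w))"
    using pm by (auto simp: plus_factor_iff)
  show c: "gm z = (\<lambda>w. if w = 0 then mat 1 else gm (1 / w)) (cnj z)" if "cmod z = 1" for z
  proof -
    have "cnj z \<noteq> 0" using that by auto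
    then show ?thesis using circ_inv[OF that] by simp
  qed
  show "\<And>z. cmod z = 1 \<Longrightarrow> g z = gp z ** diag_powers a z ** matrix_inv (gm z)" by (rule e)
  show "invertible (gm z)" if "cmod z = 1" for z
  proof -
    have "cnj z \<in> cball 0 1" using that by simp
    moreover have "\<forall>w\<in>cball 0 1. invertible (if w = 0 then mat 1 else gm (1 / w))"
      using pm unfolding plus_factor_iff by blast
    ultimately have "invertible (if cnj z = 0 then mat 1 else gm (1 / cnj z))" by blast
    then show ?thesis using c[OF that] by simp
  qed
qed

lemma idA:
  fixes g gp gm D :: "complex \<Rightarrow> complex^'n^'n"
  assumes sym: "\<forall>z. cmod z = 1 \<longrightarrow> g z ** transpose (g (- z)) = mat 1"
    and fac: "\<And>z. cmod z = 1 \<Longrightarrow> g z = gp z ** D z ** matrix_inv (gm z)"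
    and inv: "\<And>z. cmod z = 1 \<Longrightarrow> invertible (gm z)"
    and Dt: "\<And>z. transpose (D z) = D z"
    and z: "cmod z = 1"
  shows "transpose (gm (-z)) ** gm z = D (-z) ** (transpose (gp (-z)) ** gp z) ** D z"
proof -
  have gg: "g w ** gm w = gp w ** D w" if "cmod w = 1" for w
  proof -
    have "g w ** gm w = (gp w ** D w) ** (matrix_inv (gm w) ** gm w)"
      using fac[OF that] by (simp add: matrix_mul_assoc)
    also have "\<dots> = gp w ** D w" using inv_props(2)[OF inv[OF that]] by simp
    finally show ?thesis .
  qed
  have zm: "cmod (-z) = 1" using z by simp
  have t: "transpose (g (-z)) ** g z = mat 1"
    using sym z matrix_left_right_inverse by blast
  have "transpose (gm (-z)) ** gm z = transpose (gm (-z)) ** (transpose (g (-z)) ** g z) ** gm z"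
    using t by simp
  also have "\<dots> = transpose (g (-z) ** gm (-z)) ** (g z ** gm z)"
    by (simp add: matrix_transpose_mul matrix_mul_assoc)
  also have "\<dots> = transpose (gp (-z) ** D (-z)) ** (gp z ** D z)"
    using gg[OF z] gg[OF zm] by simp
  also have "\<dots> = D (-z) ** (transpose (gp (-z)) ** gp z) ** D z"
    by (simp add: matrix_transpose_mul matrix_mul_assoc Dt)
  finally show ?thesis .
qed

lemma idB:
  fixes g gp gm D :: "complex \<Rightarrow> complex^'n^'n"
  assumes sym: "\<forall>z. cmod z = 1 \<longrightarrow> g z ** transpose (g (- z)) = mat 1"
    and fac: "\<And>z. cmod z = 1 \<Longrightarrow> g z = gp z ** D z ** matrix_inv (gm z)"
    and inv: "\<And>z. cmod z = 1 \<Longrightarrow> invertible (gp z)"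
    and Dt: "\<And>z. transpose (D z) = D z"
    and z: "cmod z = 1"
  shows "matrix_inv (gp z) ** transpose (matrix_inv (gp (-z)))
    = D z ** (matrix_inv (gm z) ** transpose (matrix_inv (gm (-z)))) ** D (-z)"
proof -
  have pg: "matrix_inv (gp w) ** g w = D w ** matrix_inv (gm w)" if "cmod w = 1" for w
  proof -
    have "matrix_inv (gp w) ** g w = (matrix_inv (gp w) ** gp w) ** (D w ** matrix_inv (gm w))"
      using fac[OF that] by (simp add: matrix_mul_assoc)
    also have "\<dots> = D w ** matrix_inv (gm w)" using inv_props(2)[OF inv[OF that]] by simp
    finally show ?thesis .
  qed
  have zm: "cmod (-z) = 1" using z by simp
  have t: "g z ** transpose (g (-z)) = mat 1"
    using sym z by blast
  have "matrix_inv (gp z) ** transpose (matrix_inv (gp (-z)))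
     = matrix_inv (gp z) ** (g z ** transpose (g (-z))) ** transpose (matrix_inv (gp (-z)))"
    using t by simp
  also have "\<dots> = (matrix_inv (gp z) ** g z) ** transpose (matrix_inv (gp (-z)) ** g (-z))"
    by (simp add: matrix_transpose_mul matrix_mul_assoc)
  also have "\<dots> = (D z ** matrix_inv (gm z)) ** transpose (D (-z) ** matrix_inv (gm (-z)))"
    using pg[OF z] pg[OF zm] by simp
  also have "\<dots> = D z ** (matrix_inv (gm z) ** transpose (matrix_inv (gm (-z)))) ** D (-z)"
    by (simp add: matrix_transpose_mul matrix_mul_assoc Dt)
  finally show ?thesis .
qed

lemma pt_negid: "pt (\<lambda>z. - z)"
  using pt_neg[OF pt_id] by simp

lemma indices_zero:
  fixes g gp gm :: "complex \<Rightarrow> complex^'n^'n"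
  assumes sym: "\<forall>z. cmod z = 1 \<longrightarrow> g z ** transpose (g (- z)) = mat 1"
    and bf: "birkhoff_factorization g gp a gm"
  shows "a i = 0"
proof -
  define Gm where "Gm = (\<lambda>w. if w = 0 then mat 1 else gm (1 / w))"
  note F = bf_facts[OF bf, folded Gm_def]
  have mgp: "mpt gp" and igp: "\<And>z. z \<in> cball 0 1 \<Longrightarrow> invertible (gp z)"
    and mGm: "mpt Gm" and iGm: "\<And>w. w \<in> cball 0 1 \<Longrightarrow> invertible (Gm w)"
    and gmc: "\<And>z. cmod z = 1 \<Longrightarrow> gm z = Gm (cnj z)"
    and fac: "\<And>z. cmod z = 1 \<Longrightarrow> g z = gp z ** diag_powers a z ** matrix_inv (gm z)"
    and igm: "\<And>z. cmod z = 1 \<Longrightarrow> invertible (gm z)"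
    using F by (auto simp: Gm_def)
  have Gm0: "Gm 0 = mat 1" by (simp add: Gm_def)
  have igpc: "invertible (gp z)" if "cmod z = 1" for z using igp that by simp
  show ?thesis
  proof (rule ccontr)
    assume "a i \<noteq> 0"
    then consider "a i > 0" | "a i < 0" by linarith
    then show False
    proof cases
      case 1
      define n where "n = nat (a i)"
      have an: "a i = int n" "n > 0" using 1 by (auto simp: n_def)
      define K where "K z = transpose (gp (-z)) ** gp z" for z
      define L where "L w = transpose (Gm (-w)) ** Gm w" for w
      have mK: "mpt K" unfolding K_def by (intro mpt_mult mpt_transpose mpt_neg mgp)
      have mL: "mpt L" unfolding L_def by (intro mpt_mult mpt_transpose mpt_neg mGm)
      define f where "f z = ((-z) * z) ^ n * K z $ i $ i" for z
      have pf: "pt f"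
        unfolding f_def
        by (intro pt_mult pt_power pt_negid pt_id) (use mK in \<open>simp add: mpt_def\<close>)
      have pl: "pt (\<lambda>w. L w $ i $ i)" using mL by (simp add: mpt_def)
      have eqc: "f z = L (cnj z) $ i $ i" if z: "cmod z = 1" for z
      proof -
        have zm: "cmod (-z) = 1" using z by simp
        have "L (cnj z) = transpose (gm (-z)) ** gm z"
          using gmc[OF z] gmc[OF zm] by (simp add: L_def)
        also have "\<dots> = diag_powers a (-z) ** K z ** diag_powers a z"
          unfolding K_def by (rule idA[OF sym fac igm diag_transpose z])
        finally have "L (cnj z) $ i $ i = (-z) powi a i * K z $ i $ i * z powi a i"
          by (simp add: diag_left diag_right)
        also have "\<dots> = ((-z) powi a i * z powi a i) * K z $ i $ i" by (simp add: mult_ac)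
        also have "(-z) powi a i * z powi a i = ((-z) * z) ^ n"
          by (metis an(1) power_int_of_nat power_mult_distrib)
        also have "((-z) * z) ^ n * K z $ i $ i = f z" by (simp add: f_def)
        finally show ?thesis by simp
      qed
      have "f 0 = L 0 $ i $ i" by (rule pt_core[OF pf pl eqc])
      moreover have "f 0 = 0" using an by (simp add: f_def)
      moreover have "L 0 = mat 1" by (simp add: L_def Gm0)
      then have "L 0 $ i $ i = 1" by (simp add: mat_def)
      ultimately show False by simp
    next
      case 2
      define m where "m = nat (- a i)"
      have am: "a i = - int m" "m > 0" using 2 by (auto simp: m_def)
      define Pi where "Pi z = matrix_inv (gp z)" for z
      define Gi where "Gi w = matrix_inv (Gm w)" for w
      have mPi: "mpt Pi" unfolding Pi_def by (rule mpt_inv[OF mgp igp])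
      have mGi: "mpt Gi" unfolding Gi_def by (rule mpt_inv[OF mGm iGm])
      define N where "N z = Pi z ** transpose (Pi (-z))" for z
      define M where "M w = Gi w ** transpose (Gi (-w))" for w
      have mN: "mpt N" unfolding N_def by (intro mpt_mult mpt_transpose mpt_neg mPi)
      have mM: "mpt M" unfolding M_def by (intro mpt_mult mpt_transpose mpt_neg mGi)
      define f where "f z = (z * (-z)) ^ m * N z $ i $ i" for z
      have pf: "pt f"
        unfolding f_def
        by (intro pt_mult pt_power pt_negid pt_id) (use mN in \<open>simp add: mpt_def\<close>)
      have pl: "pt (\<lambda>w. M w $ i $ i)" using mM by (simp add: mpt_def)
      have eqc: "f z = M (cnj z) $ i $ i" if z: "cmod z = 1" for z
      proof -
        have zm: "cmod (-z) = 1" using z by simp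
        have z0: "z \<noteq> 0" using z by auto
        have "N z = diag_powers a z ** (matrix_inv (gm z) ** transpose (matrix_inv (gm (-z)))) ** diag_powers a (-z)"
          unfolding N_def Pi_def by (rule idB[OF sym fac igpc diag_transpose z])
        also have "matrix_inv (gm z) ** transpose (matrix_inv (gm (-z))) = M (cnj z)"
          using gmc[OF z] gmc[OF zm] by (simp add: M_def Gi_def)
        finally have "N z $ i $ i = z powi a i * M (cnj z) $ i $ i * (-z) powi a i"
          by (simp add: diag_left diag_right)
        then have "f z = (z * (-z)) ^ m * (z powi a i * (-z) powi a i) * M (cnj z) $ i $ i"
          by (simp add: f_def)
        also have "(z * (-z)) ^ m * (z powi a i * (-z) powi a i) = 1"
        proof -
          have e1: "(z * (-z)) ^ m = z ^ m * (-z) ^ m" by (rule power_mult_distrib)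
          have e2: "z powi a i = inverse (z ^ m)" "(-z) powi a i = inverse ((-z) ^ m)"
            by (simp_all add: am power_int_minus)
          have nz: "z ^ m \<noteq> 0" "(-z) ^ m \<noteq> 0" using z0 by simp_all
          show ?thesis unfolding e1 e2 using nz by (simp add: field_simps)
        qed
        finally show ?thesis by simp
      qed
      have "f 0 = M 0 $ i $ i" by (rule pt_core[OF pf pl eqc])
      moreover have "f 0 = 0" using am by (simp add: f_def)
      moreover have "M 0 = mat 1" by (simp add: M_def Gi_def Gm0 inv_mat1)
      then have "M 0 $ i $ i = 1" by (simp add: mat_def)
      ultimately show False by simp
    qed
  qed
qed

theorem proposition5p1:
  fixes g gp gm :: "complex \<Rightarrow> complex^'n^'n" and a :: "'n \<Rightarrow> int"
  assumes "smooth_loop g"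
    and "\<forall>z. cmod z = 1 \<longrightarrow> g z ** transpose (g (- z)) = mat 1"
    and "birkhoff_factorization g gp a gm"
  shows "(\<forall>z. cmod z = 1 \<longrightarrow> diag_powers a z = mat 1)
    \<and> (\<forall>hp b hm. birkhoff_factorization g hp b hm \<longrightarrow>
          (\<forall>z. cmod z = 1 \<longrightarrow> hp z = gp z \<and> diag_powers b z = diag_powers a z \<and> hm z = gm z))
    \<and> (\<forall>z. cmod z \<le> 1 \<longrightarrow> gp z ** transpose (gp (- z)) = mat 1)
    \<and> (\<forall>z. cmod z \<ge> 1 \<longrightarrow> gm z ** transpose (gm (- z)) = mat 1)"
proof -
  note sym = assms(2) and bf = assms(3)
  have a0: "\<And>i. a i = 0" by (rule indices_zero[OF sym bf])
  have D1: "\<And>z. diag_powers a z = mat 1" by (rule diag_zero[OF a0])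
  define Gm where "Gm = (\<lambda>w. if w = 0 then mat 1 else gm (1 / w))"
  note F = bf_facts[OF bf, folded Gm_def]
  have mgp: "mpt gp" and igp: "\<And>z. z \<in> cball 0 1 \<Longrightarrow> invertible (gp z)"
    and mGm: "mpt Gm" and iGm: "\<And>w. w \<in> cball 0 1 \<Longrightarrow> invertible (Gm w)"
    and gmc: "\<And>z. cmod z = 1 \<Longrightarrow> gm z = Gm (cnj z)"
    and fac: "\<And>z. cmod z = 1 \<Longrightarrow> g z = gp z ** diag_powers a z ** matrix_inv (gm z)"
    and igm: "\<And>z. cmod z = 1 \<Longrightarrow> invertible (gm z)"
    using F by (auto simp: Gm_def)
  have Gm0: "Gm 0 = mat 1" by (simp add: Gm_def)
  have P1: "\<forall>z. cmod z = 1 \<longrightarrow> diag_powers a z = mat 1" using D1 by simp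
  have P2: "\<forall>z. cmod z = 1 \<longrightarrow> hp z = gp z \<and> diag_powers b z = diag_powers a z \<and> hm z = gm z"
    if bfh: "birkhoff_factorization g hp b hm" for hp b hm
  proof -
    have b0: "\<And>i. b i = 0" by (rule indices_zero[OF sym bfh])
    have E1: "\<And>z. diag_powers b z = mat 1" by (rule diag_zero[OF b0])
    define Hm where "Hm = (\<lambda>w. if w = 0 then mat 1 else hm (1 / w))"
    note H = bf_facts[OF bfh, folded Hm_def]
    have mhp: "mpt hp" and ihp: "\<And>z. z \<in> cball 0 1 \<Longrightarrow> invertible (hp z)"
      and mHm: "mpt Hm" and iHm: "\<And>w. w \<in> cball 0 1 \<Longrightarrow> invertible (Hm w)"
      and hmc: "\<And>z. cmod z = 1 \<Longrightarrow> hm z = Hm (cnj z)"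
      and hfac: "\<And>z. cmod z = 1 \<Longrightarrow> g z = hp z ** diag_powers b z ** matrix_inv (hm z)"
      and ihm: "\<And>z. cmod z = 1 \<Longrightarrow> invertible (hm z)"
      using H by (auto simp: Hm_def)
    define X where "X z = matrix_inv (hp z) ** gp z" for z
    define Y where "Y w = matrix_inv (Hm w) ** Gm w" for w
    have mX: "mpt X" unfolding X_def by (intro mpt_mult mpt_inv[OF mhp ihp] mgp)
    have mY: "mpt Y" unfolding Y_def by (intro mpt_mult mpt_inv[OF mHm iHm] mGm)
    have Y0: "Y 0 = mat 1" by (simp add: Y_def Gm0 Hm_def inv_mat1)
    have XY: "X z = matrix_inv (hm z) ** gm z" if z: "cmod z = 1" for z
    proof -
      have ihpz: "invertible (hp z)" using ihp z by simp
      have E: "hp z ** matrix_inv (hm z) = gp z ** matrix_inv (gm z)"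
        using fac[OF z] hfac[OF z] by (simp add: D1 E1)
      have "X z = matrix_inv (hp z) ** gp z ** (matrix_inv (gm z) ** gm z)"
        using inv_props(2)[OF igm[OF z]] by (simp add: X_def)
      also have "\<dots> = matrix_inv (hp z) ** (gp z ** matrix_inv (gm z)) ** gm z"
        by (simp add: matrix_mul_assoc)
      also have "\<dots> = matrix_inv (hp z) ** (hp z ** matrix_inv (hm z)) ** gm z"
        using E by simp
      also have "\<dots> = (matrix_inv (hp z) ** hp z) ** matrix_inv (hm z) ** gm z"
        by (simp add: matrix_mul_assoc)
      also have "\<dots> = matrix_inv (hm z) ** gm z"
        using inv_props(2)[OF ihpz] by simp
      finally show ?thesis .
    qed
    have XYc: "X z = Y (cnj z)" if z: "cmod z = 1" for z
      using XY[OF z] gmc[OF z] hmc[OF z] by (simp add: Y_def)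
    show ?thesis
    proof (intro allI impI conjI)
      fix z :: complex assume z: "cmod z = 1"
      have zc: "z \<in> cball 0 1" using z by simp
      have "X z = Y 0" using matrix_core[OF mX mY XYc zc] by blast
      then have X1: "X z = mat 1" using Y0 by simp
      have ihpz: "invertible (hp z)" using ihp zc by simp
      have "gp z = (hp z ** matrix_inv (hp z)) ** gp z" using inv_props(1)[OF ihpz] by simp
      also have "\<dots> = hp z ** X z" by (simp add: X_def matrix_mul_assoc)
      finally show "hp z = gp z" using X1 by simp
      show "diag_powers b z = diag_powers a z" using D1 E1 by simp
      have "gm z = (hm z ** matrix_inv (hm z)) ** gm z" using inv_props(1)[OF ihm[OF z]] by simp
      also have "\<dots> = hm z ** X z" using XY[OF z] by (simp add: matrix_mul_assoc)
      finally show "hm z = gm z" using X1 by simp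
    qed
  qed
  define K where "K z = transpose (gp (-z)) ** gp z" for z
  define L where "L w = transpose (Gm (-w)) ** Gm w" for w
  have mK: "mpt K" unfolding K_def by (intro mpt_mult mpt_transpose mpt_neg mgp)
  have mL: "mpt L" unfolding L_def by (intro mpt_mult mpt_transpose mpt_neg mGm)
  have L0: "L 0 = mat 1" by (simp add: L_def Gm0)
  have KL: "K z = L (cnj z)" if z: "cmod z = 1" for z
  proof -
    have zm: "cmod (-z) = 1" using z by simp
    have "L (cnj z) = transpose (gm (-z)) ** gm z"
      using gmc[OF z] gmc[OF zm] by (simp add: L_def)
    also have "\<dots> = diag_powers a (-z) ** K z ** diag_powers a z"
      unfolding K_def by (rule idA[OF sym fac igm diag_transpose z])
    also have "\<dots> = K z" by (simp add: D1)
    finally show ?thesis by simp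
  qed
  have "(0::complex) \<in> cball 0 1" by simp
  then have "K 0 = L 0" using matrix_core[OF mK mL KL] by blast
  then have K0: "K 0 = mat 1" using L0 by simp
  have P3: "\<forall>z. cmod z \<le> 1 \<longrightarrow> gp z ** transpose (gp (- z)) = mat 1"
  proof (intro allI impI)
    fix z :: complex assume "cmod z \<le> 1"
    then have "z \<in> cball 0 1" by simp
    then have "K z = L 0" using matrix_core[OF mK mL KL] by blast
    then have "K z = mat 1" using L0 by simp
    then show "gp z ** transpose (gp (- z)) = mat 1"
      unfolding K_def using matrix_left_right_inverse by blast
  qed
  have P4: "\<forall>z. cmod z \<ge> 1 \<longrightarrow> gm z ** transpose (gm (- z)) = mat 1"
  proof (intro allI impI)
    fix z :: complex assume z: "cmod z \<ge> 1"
    then have z0: "z \<noteq> 0" by auto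
    have wc: "1 / z \<in> cball 0 1" using z by (simp add: norm_divide divide_le_eq)
    have "L (1 / z) = K 0" using matrix_core[OF mK mL KL wc] by blast
    then have "L (1 / z) = mat 1" using K0 by simp
    moreover have "L (1 / z) = transpose (gm (-z)) ** gm z"
      using z0 by (simp add: L_def Gm_def)
    ultimately show "gm z ** transpose (gm (- z)) = mat 1"
      using matrix_left_right_inverse by metis
  qed
  show ?thesis using P1 P2 P3 P4 by blast
qed

end
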